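(* Let $A$ be a finite-dimensional complex evolution algebra which is not a non-zero trivial evolution algebra, with natural basis $B=\{e_1,\dots,e_n\}$ and structure matrix $W=(\omega_{ij})_{i,j=1}^n$ (so $e_j^2=\sum_i\omega_{ij}e_i$). Let $a=\sum_{i=1}^n\alpha_ie_i$, $D_a=\mathrm{diag}(\alpha_1,\dots,\alpha_n)$ and $\lambda\in\mathbb{C}$. Then: (i) $\lambda\in\sigma_m^A(a)$ if and only if $\lambda=0$ or $\lambda$ is an eigenvalue of the matrix $WD_a$; (ii) $\lambda\in\sigma^A(a)$ if and only if $\lambda=0$ or the linear system $(WD_a-\lambda I_n)\beta=(\alpha_1,\dots,\alpha_n)^T$ has no solution $\beta\in\mathbb{C}^n$ (in which case $\lambda\in\sigma^A_m(a)$).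
   Context: An evolution algebra is an algebra with a basis $\{e_i\}$ (natural basis) with $e_ie_j=0$ for $i\neq j$; a non-zero trivial evolution algebra has a natural basis with $e_i^2=\omega_{ii}e_i$, $\omega_{ii}\neq0$ for all $i$. For a complex algebra $A$: if $A$ has a unit $e$ put $\tilde A=A$, else $\tilde A=A\oplus\mathbb{C}\mathbf1$ is the unitization with product $(a+\lambda\mathbf1)(b+\mu\mathbf1)=ab+\lambda b+\mu a+\lambda\mu\mathbf1$ and $e=\mathbf1$. $x\in\tilde A$ is invertible if it has a left and a right inverse, and m-invertible if $L_x(y)=xy$ and $R_x(y)=yx$ are bijective on $\tilde A$. $\sigma^A(a)=\{\lambda:a-\lambda e\text{ not invertible in }\tilde A\}$ and $\sigma^A_m(a)=\{\lambda:a-\lambda e\text{ not m-invertible in }\tilde A\}$. *)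

theory Defs
  imports "HOL-Analysis.Analysis"
begin

text \<open>A finite-dimensional complex evolution algebra with natural basis
  e_i (i ranging over the finite type 'n), written in coordinates w.r.t. this
  natural basis. The structure matrix W has entries W$i$j = omega_ij, so that
  e_j e_j = sum_i omega_ij e_i and e_j e_k = 0 for j \<noteq> k.\<close>

definition evo_mult :: "complex^'n^'n \<Rightarrow> complex^'n \<Rightarrow> complex^'n \<Rightarrow> complex^'n" where
  "evo_mult W x y = (\<chi> i. \<Sum>j\<in>UNIV. W$i$j * x$j * y$j)"

definition is_basis_C :: "('n::finite \<Rightarrow> complex^'n) \<Rightarrow> bool" where
  "is_basis_C f \<longleftrightarrow>
     (\<forall>c. (\<Sum>i\<in>UNIV. c i *s f i) = 0 \<longrightarrow> (\<forall>i. c i = 0)) \<and>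
     (\<forall>x. \<exists>c. x = (\<Sum>i\<in>UNIV. c i *s f i))"

definition natural_basis :: "complex^'n^'n \<Rightarrow> ('n::finite \<Rightarrow> complex^'n) \<Rightarrow> bool" where
  "natural_basis W f \<longleftrightarrow> is_basis_C f \<and>
     (\<forall>i j. i \<noteq> j \<longrightarrow> evo_mult W (f i) (f j) = 0)"

text \<open>Non-zero trivial evolution algebra: some natural basis with
  f_i^2 = w_i f_i, w_i \<noteq> 0 for all i (the algebra is non-zero since 'n is nonempty).\<close>
definition nonzero_trivial_evo :: "complex^'n^'n \<Rightarrow> bool" where
  "nonzero_trivial_evo W \<longleftrightarrow> (\<exists>f::'n::finite \<Rightarrow> complex^'n. natural_basis W f \<and>
     (\<forall>i. \<exists>w. w \<noteq> 0 \<and> evo_mult W (f i) (f i) = w *s f i))"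

definition evo_has_unit :: "complex^'n^'n \<Rightarrow> bool" where
  "evo_has_unit W \<longleftrightarrow> (\<exists>e. \<forall>x. evo_mult W e x = x \<and> evo_mult W x e = x)"

definition evo_unit :: "complex^'n^'n \<Rightarrow> complex^'n" where
  "evo_unit W = (SOME e. \<forall>x. evo_mult W e x = x \<and> evo_mult W x e = x)"

text \<open>Unitization A \<oplus> C 1 with (a + l1)(b + m1) = ab + l b + m a + l m 1.\<close>
definition unitz_mult :: "complex^'n^'n \<Rightarrow> ((complex^'n) \<times> complex) \<Rightarrow> ((complex^'n) \<times> complex)
    \<Rightarrow> ((complex^'n) \<times> complex)" where
  "unitz_mult W p q = (evo_mult W (fst p) (fst q) + snd p *s fst q + snd q *s fst p,
                       snd p * snd q)"

definition invertible_in :: "('a \<Rightarrow> 'a \<Rightarrow> 'a) \<Rightarrow> 'a \<Rightarrow> 'a \<Rightarrow> bool" where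
  "invertible_in m e x \<longleftrightarrow> (\<exists>y. m x y = e) \<and> (\<exists>z. m z x = e)"

definition m_invertible_in :: "('a \<Rightarrow> 'a \<Rightarrow> 'a) \<Rightarrow> 'a \<Rightarrow> bool" where
  "m_invertible_in m x \<longleftrightarrow> bij (m x) \<and> bij (\<lambda>y. m y x)"

text \<open>sigma^A(a) and sigma^A_m(a): in A itself if A has a unit, otherwise in the
  unitization, where a - l e = (a, -l).\<close>
definition evo_spectrum :: "complex^'n^'n \<Rightarrow> complex^'n \<Rightarrow> complex set" where
  "evo_spectrum W a = (if evo_has_unit W
     then {l. \<not> invertible_in (evo_mult W) (evo_unit W) (a - l *s evo_unit W)}
     else {l. \<not> invertible_in (unitz_mult W) (0, 1) (a, - l)})"

definition evo_m_spectrum :: "complex^'n^'n \<Rightarrow> complex^'n \<Rightarrow> complex set" where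
  "evo_m_spectrum W a = (if evo_has_unit W
     then {l. \<not> m_invertible_in (evo_mult W) (a - l *s evo_unit W)}
     else {l. \<not> m_invertible_in (unitz_mult W) (a, - l)})"

definition diag_mat :: "'a::zero^'n \<Rightarrow> 'a^'n^'n" where
  "diag_mat a = (\<chi> i j. if i = j then a$i else 0)"

definition is_eigenvalue :: "complex^'n^'n \<Rightarrow> complex \<Rightarrow> bool" where
  "is_eigenvalue M l \<longleftrightarrow> (\<exists>v. v \<noteq> 0 \<and> M *v v = l *s v)"

end

theory Submission
  imports Defs
begin

lemma sum_axis_comp: "(\<Sum>i\<in>UNIV. c i *s axis i (1::complex)) $ k = c k"
  by (simp add: sum_component axis_def if_distrib cong: if_cong)

lemma evo_mult_mat: "evo_mult W a b = (W ** diag_mat a) *v b"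
  by (simp add: vec_eq_iff evo_mult_def matrix_matrix_mult_def matrix_vector_mult_def diag_mat_def
      if_distrib[of "\<lambda>x. _ * x"] sum.delta cong: if_cong)

lemma evo_mult_comm: "evo_mult W a b = evo_mult W b a"
  by (simp add: evo_mult_def mult_ac)

lemma mat_sub_mult: "(M - mat l) *v b = M *v b - l *s (b::complex^'n)"
  by (simp add: vec_eq_iff matrix_vector_mult_def mat_def sum_subtractf left_diff_distrib
      if_distrib[of "\<lambda>x. x * _"] sum.delta cong: if_cong)

lemma mat_mult_sc: "mat l *v b = l *s (b::complex^'n)"
  by (simp add: vec_eq_iff matrix_vector_mult_def mat_def
      if_distrib[of "\<lambda>x. x * _"] sum.delta cong: if_cong)

lemma unitz_comm: "unitz_mult W p q = unitz_mult W q p"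
  by (simp add: unitz_mult_def evo_mult_comm[of W "fst p"] add_ac mult_ac)

lemma unit_trivial:
  assumes "evo_has_unit W" shows "nonzero_trivial_evo (W::complex^'n::finite^'n)"
proof -
  obtain e where e: "\<And>x. evo_mult W e x = x" using assms unfolding evo_has_unit_def by blast
  have key: "W$i$j * e$j = (if i = j then 1 else 0)" for i j
  proof -
    have "evo_mult W e (axis j 1) $ i = axis j 1 $ i" by (simp add: e)
    thus ?thesis by (simp add: evo_mult_def axis_def if_distrib[of "\<lambda>x. _ * x"] sum.delta cong: if_cong)
  qed
  have nz: "W$i$i \<noteq> 0" for i using key[of i i] by auto
  have off: "i \<noteq> j \<Longrightarrow> W$i$j = 0" for i j
  proof -
    assume "i \<noteq> j"
    have "e$j \<noteq> 0" using key[of j j] by auto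
    with key[of i j] \<open>i \<noteq> j\<close> show ?thesis by simp
  qed
  let ?f = "\<lambda>i. axis i (1::complex) :: complex^'n"
  have nb: "natural_basis W ?f"
    unfolding natural_basis_def is_basis_C_def
  proof (intro conjI allI impI)
    fix c :: "'n \<Rightarrow> complex" and i
    assume "(\<Sum>i\<in>UNIV. c i *s ?f i) = 0"
    hence "(\<Sum>i\<in>UNIV. c i *s ?f i) $ i = 0" by simp
    thus "c i = 0" by (metis sum_axis_comp)
  next
    fix x :: "complex^'n"
    show "\<exists>c. x = (\<Sum>i\<in>UNIV. c i *s ?f i)"
    proof (rule exI[of _ "\<lambda>i. x$i"])
      show "x = (\<Sum>i\<in>UNIV. x$i *s ?f i)" unfolding vec_eq_iff
        using sum_axis_comp[of "\<lambda>i. x$i"] by simp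
    qed
  next
    fix i j :: 'n assume "i \<noteq> j"
    thus "evo_mult W (?f i) (?f j) = 0"
      by (auto simp: vec_eq_iff evo_mult_def axis_def intro!: sum.neutral)
  qed
  show ?thesis unfolding nonzero_trivial_evo_def
  proof (rule exI[of _ ?f], intro conjI allI)
    show "natural_basis W ?f" by (rule nb)
    fix i
    show "\<exists>w. w \<noteq> 0 \<and> evo_mult W (?f i) (?f i) = w *s ?f i"
      by (rule exI[of _ "W$i$i"]) (auto simp: nz vec_eq_iff evo_mult_def axis_def off
          if_distrib[of "\<lambda>x. _ * x"] sum.delta cong: if_cong)
  qed
qed


lemma inj_surj_mat: "inj ((*v) (A::complex^'n::finite^'n)) \<longleftrightarrow> surj ((*v) A)"
  by (metis matrix_left_invertible_injective matrix_right_invertible_surjective matrix_left_right_inverse)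

lemma inj_mat_iff: "inj ((*v) (A::complex^'n::finite^'n)) \<longleftrightarrow> (\<forall>v. A *v v = 0 \<longrightarrow> v = 0)"
proof
  assume "inj ((*v) A)" thus "\<forall>v. A *v v = 0 \<longrightarrow> v = 0"
    by (metis injD matrix_vector_mult_0_right)
next
  assume h: "\<forall>v. A *v v = 0 \<longrightarrow> v = 0"
  show "inj ((*v) A)"
  proof (rule injI)
    fix x y assume "A *v x = A *v y"
    hence "A *v (x - y) = 0" by (simp add: matrix_vector_mult_diff_distrib)
    with h show "x = y" by (metis eq_iff_diff_eq_0)
  qed
qed

theorem proposition5p3:
  fixes W :: "complex^'n^'n" and a :: "complex^'n" and l :: complex
  assumes "\<not> nonzero_trivial_evo W"
  shows "(l \<in> evo_m_spectrum W a \<longleftrightarrow> l = 0 \<or> is_eigenvalue (W ** diag_mat a) l)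
       \<and> (l \<in> evo_spectrum W a \<longleftrightarrow>
            l = 0 \<or> \<not> (\<exists>\<beta>. (W ** diag_mat a - mat l) *v \<beta> = a))
       \<and> (\<not> (\<exists>\<beta>. (W ** diag_mat a - mat l) *v \<beta> = a) \<longrightarrow> l \<in> evo_m_spectrum W a)"
proof -
  define M where "M = W ** diag_mat a"
  define A where "A = M - mat l"
  define L where "L = (\<lambda>p::(complex^'n)\<times>complex. (A *v fst p + snd p *s a, - l * snd p))"
  have nu: "\<not> evo_has_unit W" using assms unit_trivial by blast
  have um1: "unitz_mult W (a, -l) = L"
  proof (rule ext)
    fix p :: "(complex^'n) \<times> complex"
    have "A *v fst p = M *v fst p - l *s fst p" unfolding A_def by (rule mat_sub_mult)
    moreover have "evo_mult W a (fst p) = M *v fst p" unfolding M_def by (rule evo_mult_mat)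
    ultimately show "unitz_mult W (a, -l) p = L p"
      by (simp add: L_def unitz_mult_def vec_eq_iff)
  qed
  have um2: "(\<lambda>p. unitz_mult W p (a, -l)) = L"
  proof (rule ext)
    fix p show "unitz_mult W p (a, -l) = L p"
      using unitz_comm[of W p "(a,-l)"] um1 by simp
  qed
  have ms: "l \<in> evo_m_spectrum W a \<longleftrightarrow> \<not> bij L"
    unfolding evo_m_spectrum_def m_invertible_in_def
    using nu um1 um2 by simp
  have sp: "l \<in> evo_spectrum W a \<longleftrightarrow> \<not> (\<exists>y. L y = (0,1))"
    unfolding evo_spectrum_def invertible_in_def
    using nu um1 um2 by (simp add: fun_eq_iff)
  have eig: "is_eigenvalue M l \<longleftrightarrow> \<not> inj ((*v) A)"
    unfolding is_eigenvalue_def inj_mat_iff A_def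
    by (auto simp: mat_sub_mult)
  have inv: "(\<exists>y. L y = (0,1)) \<longleftrightarrow> l \<noteq> 0 \<and> (\<exists>\<beta>. A *v \<beta> = a)"
  proof
    assume "\<exists>y. L y = (0,1)"
    then obtain b m where bm: "A *v b + m *s a = 0" "- l * m = 1" by (auto simp: L_def)
    hence l0: "l \<noteq> 0" by auto
    have "A *v b = - (m *s a)" using bm(1) by (simp add: eq_neg_iff_add_eq_0)
    hence "A *v (l *s b) = l *s (- (m *s a))" by (simp add: vector_scalar_commute)
    also have "\<dots> = (- l * m) *s a" by (simp add: vec_eq_iff)
    also have "\<dots> = a" using bm(2) by simp
    finally have "A *v (l *s b) = a" .
    thus "l \<noteq> 0 \<and> (\<exists>\<beta>. A *v \<beta> = a)" using l0 by blast
  next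
    assume "l \<noteq> 0 \<and> (\<exists>\<beta>. A *v \<beta> = a)"
    then obtain \<beta> where l0: "l \<noteq> 0" and b: "A *v \<beta> = a" by blast
    have "L (inverse l *s \<beta>, - inverse l) = (0,1)"
      using l0 by (simp add: L_def vector_scalar_commute b)
    thus "\<exists>y. L y = (0,1)" by blast
  qed
  have part1: "\<not> bij L \<longleftrightarrow> l = 0 \<or> \<not> inj ((*v) A)"
  proof (cases "l = 0")
    case True
    have "(0,1) \<notin> range L" using True by (auto simp: L_def)
    thus ?thesis using True bij_is_surj by blast
  next
    case l0: False
    show ?thesis
    proof (cases "inj ((*v) A)")
      case True
      hence s: "surj ((*v) A)" using inj_surj_mat by blast
      have "inj L"
      proof (rule injI)
        fix p q assume "L p = L q"
        hence e: "A *v fst p + snd p *s a = A *v fst q + snd q *s a" "- l * snd p = - l * snd q"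
          by (auto simp: L_def)
        hence "snd p = snd q" using l0 by simp
        with e have "A *v fst p = A *v fst q" by simp
        hence "fst p = fst q" using True by (simp add: inj_def)
        with \<open>snd p = snd q\<close> show "p = q" by (simp add: prod_eq_iff)
      qed
      moreover have "surj L"
        unfolding surj_def
      proof
        fix x :: "(complex^'n) \<times> complex"
        define m where "m = - snd x / l"
        obtain b where b: "A *v b = fst x - m *s a" using surjD[OF s, of "fst x - m *s a"] by (metis (no_types))
        have "A *v b + m *s a = fst x" using b by simp
        moreover have "- l * m = snd x" using l0 by (simp add: m_def)
        ultimately have "L (b, m) = x" by (simp add: L_def prod_eq_iff)
        thus "\<exists>y. x = L y" by metis
      qed
      ultimately show ?thesis using True l0 by (simp add: bij_def)
    next
      case False
      then obtain x y where xy: "A *v x = A *v y" "x \<noteq> y" unfolding inj_def by blast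
      have "L (x,0) = L (y,0)" by (simp add: L_def xy)
      hence "\<not> inj L" using xy unfolding inj_def by blast
      thus ?thesis using False bij_is_inj by blast
    qed
  qed
  have p3: "\<not> (\<exists>\<beta>. A *v \<beta> = a) \<Longrightarrow> \<not> inj ((*v) A)"
    using inj_surj_mat by (metis surjD)
  show ?thesis
    using ms sp part1 inv eig p3 unfolding M_def[symmetric] A_def[symmetric] by auto
qed

end
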